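(* Let $r,p\ge0$ with $r+2p=n$, and $\mathbf t=(t_1,\dots,t_p)\in\mathbb C^p$ with all $t_i\ne0$. On the $W^n$-module $S(\mathbf t,0)$ all $u_k(1)$ act by zero, and $u_k(0)$ acts by $0$ if $k$ is odd or $k>2p$, and by the scalar $\sigma_{k/2}(t_1,\dots,t_p)$ if $k$ is even, where $\sigma_a$ is the $a$-th elementary symmetric polynomial.
   Context: For $m\ge0$, $U(\mathfrak h_m)$ is the superalgebra generated by odd $\xi_1,\dots,\xi_m$ with $\xi_i\xi_j+\xi_j\xi_i=0$ ($i\ne j$), $x_i=\xi_i^2$; it is the enveloping algebra of the Cartan subalgebra of $Q(m)$. $W^m\subset U(\mathfrak h_m)$ is the principal finite $W$-algebra of $Q(m)$ realized via the injective Harish-Chandra homomorphism, generated by $u_k(0),u_k(1)$ ($1\le k\le m$), the even and odd parts of $\sum_{1\le i_1<\dots<i_k\le m}\prod_{j=1}^{k}(x_{i_j}+(-1)^{k-j}\xi_{i_j})$ (ordered product). $W^2$ is generated by $\phi_0=\xi_1+\xi_2$, $\phi_1=x_2\xi_1-x_1\xi_2$, $z_0=x_1+x_2$, $z_1'=x_1x_2-\xi_1\xi_2$; $\Gamma_t$ is the $(1|0)$-dimensional $W^2$-module with $\phi_0,\phi_1,z_0$ acting by $0$ and $z_1'$ by $t$. The trivial $W^r$-module $\mathbb C$ is the restriction of the even one-dimensional $U(\mathfrak h_r)$-module on which all $\xi_i$ act by $0$. Via $U(\mathfrak h_n)\cong U(\mathfrak h_r)\otimes U(\mathfrak h_2)^{\otimes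 p}$ (super tensor product, consecutive blocks of $\xi$'s to successive factors) one has $W^n\subset W^r\otimes(W^2)^{\otimes p}$, and $S(\mathbf t,0)$ is the restriction to $W^n$ of the one-dimensional module $\mathbb C\otimes\Gamma_{t_1}\otimes\dots\otimes\Gamma_{t_p}$. *)

theory Defs
  imports Complex_Main "HOL-Library.Poly_Mapping"
begin

text \<open>
Model of U(h_m): all U(h_m) live inside one ambient superalgebra U(h_infinity) with odd
generators xi_1, xi_2, ... subject to xi_i xi_j + xi_j xi_i = 0 (i ~= j).
A PBW basis is given by ordered monomials xi_1^(a_1) xi_2^(a_2) ...,
indexed by exponent vectors a :: nat =>_0 nat (index i = generator xi_i, 1-based).
An element is its coefficient function (only finitely supported ones are used).
\<close>

type_synonym uh = "(nat \<Rightarrow>\<^sub>0 nat) \<Rightarrow> complex"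

text \<open>Sign for the product of ordered monomials: xi^a xi^b = (-1)^(msign a b) xi^(a+b).\<close>
definition msign :: "(nat \<Rightarrow>\<^sub>0 nat) \<Rightarrow> (nat \<Rightarrow>\<^sub>0 nat) \<Rightarrow> nat" where
  "msign a b = (\<Sum>i\<in>Poly_Mapping.keys a. \<Sum>j\<in>Poly_Mapping.keys b. if j < i then Poly_Mapping.lookup a i * Poly_Mapping.lookup b j else 0)"

definition uone :: uh where
  "uone = (\<lambda>c. if c = 0 then 1 else 0)"

definition uadd :: "uh \<Rightarrow> uh \<Rightarrow> uh" where
  "uadd f g = (\<lambda>c. f c + g c)"

definition usmul :: "complex \<Rightarrow> uh \<Rightarrow> uh" where
  "usmul z f = (\<lambda>c. z * f c)"

definition umul :: "uh \<Rightarrow> uh \<Rightarrow> uh" where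
  "umul f g = (\<lambda>c. \<Sum>(a, b) \<in> {(a, b). a + b = c}. (-1) ^ msign a b * f a * g b)"

definition usum :: "('i \<Rightarrow> uh) \<Rightarrow> 'i set \<Rightarrow> uh" where
  "usum F S = (\<lambda>c. \<Sum>s\<in>S. F s c)"

definition uprodl :: "uh list \<Rightarrow> uh" where
  "uprodl xs = foldr umul xs uone"

definition xi :: "nat \<Rightarrow> uh" where
  "xi i = (\<lambda>c. if c = Poly_Mapping.single i 1 then 1 else 0)"

definition xx :: "nat \<Rightarrow> uh" where
  "xx i = umul (xi i) (xi i)"

text \<open>Counit: the action on the trivial even 1-dimensional module (all xi act by 0).\<close>
definition counit :: "uh \<Rightarrow> complex" where
  "counit f = f 0"

definition mdeg :: "(nat \<Rightarrow>\<^sub>0 nat) \<Rightarrow> nat" where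
  "mdeg a = (\<Sum>i\<in>Poly_Mapping.keys a. Poly_Mapping.lookup a i)"

definition upart :: "nat \<Rightarrow> uh \<Rightarrow> uh" where
  "upart e f = (\<lambda>c. if mdeg c mod 2 = e mod 2 then f c else 0)"

definition ugen :: "nat \<Rightarrow> nat \<Rightarrow> uh" where
  "ugen m k = usum (\<lambda>I. uprodl (map (\<lambda>(j, i). uadd (xx i) (usmul ((-1) ^ (k - j)) (xi i)))
                                   (enumerate 1 (sorted_list_of_set I))))
                   {I. I \<subseteq> {1..m} \<and> card I = k}"

text \<open>u_k(e), generators of the principal finite W-algebra W^m of Q(m)\<close>
definition u :: "nat \<Rightarrow> nat \<Rightarrow> nat \<Rightarrow> uh" where
  "u m k e = upart e (ugen m k)"

definition Wgens :: "nat \<Rightarrow> uh set" where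
  "Wgens m = {u m k e | k e. 1 \<le> k \<and> k \<le> m \<and> e \<in> {0, 1}}"

inductive_set subalg :: "uh set \<Rightarrow> uh set" for G where
  one: "uone \<in> subalg G"
| gen: "g \<in> G \<Longrightarrow> g \<in> subalg G"
| add: "a \<in> subalg G \<Longrightarrow> b \<in> subalg G \<Longrightarrow> uadd a b \<in> subalg G"
| smul: "a \<in> subalg G \<Longrightarrow> usmul z a \<in> subalg G"
| mul: "a \<in> subalg G \<Longrightarrow> b \<in> subalg G \<Longrightarrow> umul a b \<in> subalg G"

abbreviation W :: "nat \<Rightarrow> uh set" where
  "W m \<equiv> subalg (Wgens m)"

text \<open>Generators of W^2 placed in the i-th U(h_2) block (i = 1..p) of U(h_n) = U(h_r) (x) U(h_2)^p,
  i.e. on xi_(r+2i-1), xi_(r+2i).\<close>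
definition blk_a :: "nat \<Rightarrow> nat \<Rightarrow> nat" where "blk_a r i = r + 2 * i - 1"
definition blk_b :: "nat \<Rightarrow> nat \<Rightarrow> nat" where "blk_b r i = r + 2 * i"

definition phi0 :: "nat \<Rightarrow> nat \<Rightarrow> uh" where
  "phi0 r i = uadd (xi (blk_a r i)) (xi (blk_b r i))"
definition phi1 :: "nat \<Rightarrow> nat \<Rightarrow> uh" where
  "phi1 r i = uadd (umul (xx (blk_b r i)) (xi (blk_a r i)))
                   (usmul (-1) (umul (xx (blk_a r i)) (xi (blk_b r i))))"
definition z0 :: "nat \<Rightarrow> nat \<Rightarrow> uh" where
  "z0 r i = uadd (xx (blk_a r i)) (xx (blk_b r i))"
definition z1' :: "nat \<Rightarrow> nat \<Rightarrow> uh" where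
  "z1' r i = uadd (umul (xx (blk_a r i)) (xx (blk_b r i)))
                  (usmul (-1) (umul (xi (blk_a r i)) (xi (blk_b r i))))"

definition Wtens :: "nat \<Rightarrow> nat \<Rightarrow> uh set" where
  "Wtens r p = subalg (Wgens r \<union> (\<Union>i\<in>{1..p}. {phi0 r i, phi1 r i, z0 r i, z1' r i}))"

text \<open>chi is the character (action on the one-dimensional even module)
  C (x) Gamma_(t_1) (x) ... (x) Gamma_(t_p) of W^r (x) (W^2)^(x p).\<close>
definition is_S_char :: "nat \<Rightarrow> nat \<Rightarrow> (nat \<Rightarrow> complex) \<Rightarrow> (uh \<Rightarrow> complex) \<Rightarrow> bool" where
  "is_S_char r p t \<chi> \<longleftrightarrow>
     \<chi> uone = 1 \<and>
     (\<forall>a\<in>Wtens r p. \<forall>b\<in>Wtens r p. \<chi> (uadd a b) = \<chi> a + \<chi> b \<and> \<chi> (umul a b) = \<chi> a * \<chi> b) \<and>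
     (\<forall>a\<in>Wtens r p. \<forall>z. \<chi> (usmul z a) = z * \<chi> a) \<and>
     (\<forall>a\<in>W r. \<chi> a = counit a) \<and>
     (\<forall>i\<in>{1..p}. \<chi> (phi0 r i) = 0 \<and> \<chi> (phi1 r i) = 0 \<and> \<chi> (z0 r i) = 0 \<and> \<chi> (z1' r i) = t i)"

definition esym :: "nat \<Rightarrow> nat \<Rightarrow> (nat \<Rightarrow> complex) \<Rightarrow> complex" where
  "esym a p t = (\<Sum>S | S \<subseteq> {1..p} \<and> card S = a. \<Prod>i\<in>S. t i)"

end

theory Submission imports Defs "HOL-Library.FuncSet" begin

lemma finite_D: "finite {a::nat \<Rightarrow>\<^sub>0 nat. \<forall>i. Poly_Mapping.lookup a i \<le> Poly_Mapping.lookup c i}"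
  (is "finite ?D")
proof -
  have inj: "inj_on (\<lambda>a. restrict (Poly_Mapping.lookup a) (Poly_Mapping.keys c)) ?D"
  proof (rule inj_onI)
    fix a b assume a: "a \<in> ?D" and b: "b \<in> ?D"
      and eq: "restrict (Poly_Mapping.lookup a) (Poly_Mapping.keys c) = restrict (Poly_Mapping.lookup b) (Poly_Mapping.keys c)"
    show "a = b"
    proof (rule poly_mapping_eqI)
      fix i show "Poly_Mapping.lookup a i = Poly_Mapping.lookup b i"
      proof (cases "i \<in> Poly_Mapping.keys c")
        case True then show ?thesis using fun_cong[OF eq, of i] by simp
      next
        case False then have "Poly_Mapping.lookup c i = 0" by (simp add: in_keys_iff)
        moreover have "Poly_Mapping.lookup a i \<le> Poly_Mapping.lookup c i" "Poly_Mapping.lookup b i \<le> Poly_Mapping.lookup c i"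
          using a b by auto
        ultimately show ?thesis by simp
      qed
    qed
  qed
  have sub: "(\<lambda>a. restrict (Poly_Mapping.lookup a) (Poly_Mapping.keys c)) ` ?D \<subseteq> PiE (Poly_Mapping.keys c) (\<lambda>i. {..Poly_Mapping.lookup c i})"
    by auto
  have fin: "finite (PiE (Poly_Mapping.keys c) (\<lambda>i. {..Poly_Mapping.lookup c i}))"
    by (rule finite_PiE) auto
  show ?thesis by (rule finite_imageD[OF finite_subset[OF sub fin] inj])
qed

lemma finite_P: "finite {(a, b). (a::nat \<Rightarrow>\<^sub>0 nat) + b = c}"
proof -
  let ?D = "{a::nat \<Rightarrow>\<^sub>0 nat. \<forall>i. Poly_Mapping.lookup a i \<le> Poly_Mapping.lookup c i}"
  have "{(a, b). (a::nat \<Rightarrow>\<^sub>0 nat) + b = c} \<subseteq> ?D \<times> ?D"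
    by (auto simp: lookup_add)
  then show ?thesis by (rule finite_subset[OF _ finite_cartesian_product[OF finite_D finite_D]])
qed

lemma msign_expand:
  assumes "finite K" "Poly_Mapping.keys a \<subseteq> K" "finite L" "Poly_Mapping.keys b \<subseteq> L"
  shows "msign a b = (\<Sum>i\<in>K. \<Sum>j\<in>L. if j < i then Poly_Mapping.lookup a i * Poly_Mapping.lookup b j else 0)"
proof -
  have "msign a b = (\<Sum>i\<in>K. \<Sum>j\<in>Poly_Mapping.keys b. if j < i then Poly_Mapping.lookup a i * Poly_Mapping.lookup b j else 0)"
    unfolding msign_def using assms
    by (intro sum.mono_neutral_left) (auto simp: in_keys_iff)
  also have "\<dots> = (\<Sum>i\<in>K. \<Sum>j\<in>L. if j < i then Poly_Mapping.lookup a i * Poly_Mapping.lookup b j else 0)"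
    using assms by (intro sum.cong refl sum.mono_neutral_left) (auto simp: in_keys_iff)
  finally show ?thesis .
qed

lemma msign_add_left: "msign (a + b) d = msign a d + msign b d"
proof -
  let ?K = "Poly_Mapping.keys a \<union> Poly_Mapping.keys b" and ?L = "Poly_Mapping.keys d"
  have "msign (a + b) d = (\<Sum>i\<in>?K. \<Sum>j\<in>?L. if j < i then Poly_Mapping.lookup (a+b) i * Poly_Mapping.lookup d j else 0)"
    by (rule msign_expand) (auto simp: keys_add)
  also have "\<dots> = (\<Sum>i\<in>?K. \<Sum>j\<in>?L. if j < i then Poly_Mapping.lookup a i * Poly_Mapping.lookup d j else 0)
      + (\<Sum>i\<in>?K. \<Sum>j\<in>?L. if j < i then Poly_Mapping.lookup b i * Poly_Mapping.lookup d j else 0)"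
    by (simp add: lookup_add algebra_simps flip: sum.distrib) (intro sum.cong refl, auto simp: lookup_add algebra_simps)
  also have "\<dots> = msign a d + msign b d"
    by (subst (1 2) msign_expand[where K="?K" and L="?L"]) auto
  finally show ?thesis .
qed

lemma msign_add_right: "msign a (b + d) = msign a b + msign a d"
proof -
  let ?K = "Poly_Mapping.keys a" and ?L = "Poly_Mapping.keys b \<union> Poly_Mapping.keys d"
  have "msign a (b + d) = (\<Sum>i\<in>?K. \<Sum>j\<in>?L. if j < i then Poly_Mapping.lookup a i * Poly_Mapping.lookup (b+d) j else 0)"
    by (rule msign_expand) (auto simp: keys_add)
  also have "\<dots> = (\<Sum>i\<in>?K. \<Sum>j\<in>?L. if j < i then Poly_Mapping.lookup a i * Poly_Mapping.lookup b j else 0)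
      + (\<Sum>i\<in>?K. \<Sum>j\<in>?L. if j < i then Poly_Mapping.lookup a i * Poly_Mapping.lookup d j else 0)"
    by (simp add: lookup_add algebra_simps flip: sum.distrib) (intro sum.cong refl, auto simp: lookup_add algebra_simps)
  also have "\<dots> = msign a b + msign a d"
    by (subst (1 2) msign_expand[where K="?K" and L="?L"]) auto
  finally show ?thesis .
qed

lemma msign_zero_left [simp]: "msign 0 b = 0" and msign_zero_right [simp]: "msign a 0 = 0"
  by (simp_all add: msign_def)


lemma umul_assoc: "umul (umul f g) h = umul f (umul g h)"
proof (rule ext)
  fix c :: "nat \<Rightarrow>\<^sub>0 nat"
  define P where "P = (\<lambda>c::nat \<Rightarrow>\<^sub>0 nat. {(a, b). a + b = c})"
  have fin: "\<And>c. finite (P c)" unfolding P_def by (rule finite_P)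
  define T1 where "T1 = (\<lambda>z::((nat \<Rightarrow>\<^sub>0 nat) \<times> (nat \<Rightarrow>\<^sub>0 nat)) \<times> ((nat \<Rightarrow>\<^sub>0 nat) \<times> (nat \<Rightarrow>\<^sub>0 nat)).
     (-1::complex) ^ msign (fst (fst z)) (snd (fst z)) * (-1) ^ msign (fst (snd z)) (snd (snd z))
       * f (fst (snd z)) * g (snd (snd z)) * h (snd (fst z)))"
  define T2 where "T2 = (\<lambda>z::((nat \<Rightarrow>\<^sub>0 nat) \<times> (nat \<Rightarrow>\<^sub>0 nat)) \<times> ((nat \<Rightarrow>\<^sub>0 nat) \<times> (nat \<Rightarrow>\<^sub>0 nat)).
     (-1::complex) ^ msign (fst (fst z)) (snd (fst z)) * (-1) ^ msign (fst (snd z)) (snd (snd z))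
       * f (fst (fst z)) * g (fst (snd z)) * h (snd (snd z)))"
  have "umul (umul f g) h c = (\<Sum>x\<in>P c. \<Sum>y\<in>P (fst x). T1 (x, y))"
    unfolding umul_def P_def T1_def
    by (intro sum.cong refl) (auto simp: sum_distrib_left sum_distrib_right mult.assoc mult.left_commute case_prod_beta intro!: sum.cong)
  also have "\<dots> = sum T1 (Sigma (P c) (\<lambda>x. P (fst x)))"
    using fin by (subst sum.Sigma) auto
  also have "\<dots> = sum T2 (Sigma (P c) (\<lambda>x. P (snd x)))"
  proof (rule sum.reindex_bij_witness[where j = "\<lambda>((e, d), (a, b)). ((a, b + d), (b, d))"
        and i = "\<lambda>((a, e), (b, d)). ((a + b, d), (a, b))"])
    fix z assume "z \<in> Sigma (P c) (\<lambda>x. P (fst x))"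
    then obtain e d a b where z: "z = ((e, d), (a, b))" "e + d = c" "a + b = e" unfolding P_def by auto
    show "(\<lambda>((a, e), (b, d)). ((a + b, d), (a, b))) ((\<lambda>((e, d), (a, b)). ((a, b + d), (b, d))) z) = z"
      using z by auto
    show "(\<lambda>((e, d), (a, b)). ((a, b + d), (b, d))) z \<in> Sigma (P c) (\<lambda>x. P (snd x))"
      using z unfolding P_def by (auto simp: add.assoc)
    show "T2 ((\<lambda>((e, d), (a, b)). ((a, b + d), (b, d))) z) = T1 z"
      using z(1) unfolding T1_def T2_def
      by (simp add: z(3)[symmetric] msign_add_left msign_add_right power_add algebra_simps)
  next
    fix z assume "z \<in> Sigma (P c) (\<lambda>x. P (snd x))"
    then obtain e d a b where z: "z = ((a, e), (b, d))" "a + e = c" "b + d = e" unfolding P_def by auto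
    show "(\<lambda>((e, d), (a, b)). ((a, b + d), (b, d))) ((\<lambda>((a, e), (b, d)). ((a + b, d), (a, b))) z) = z"
      using z by auto
    show "(\<lambda>((a, e), (b, d)). ((a + b, d), (a, b))) z \<in> Sigma (P c) (\<lambda>x. P (fst x))"
      using z unfolding P_def by (auto simp: add.assoc)
  qed
  also have "\<dots> = (\<Sum>x\<in>P c. \<Sum>y\<in>P (snd x). T2 (x, y))"
    using fin by (subst sum.Sigma) auto
  also have "\<dots> = umul f (umul g h) c"
    unfolding umul_def P_def T2_def
    by (intro sum.cong refl) (auto simp: sum_distrib_left sum_distrib_right mult.assoc mult.left_commute case_prod_beta intro!: sum.cong)
  finally show "umul (umul f g) h c = umul f (umul g h) c" .
qed

lemma umul_uone_left [simp]: "umul uone f = f"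
proof (rule ext)
  fix c :: "nat \<Rightarrow>\<^sub>0 nat"
  have "umul uone f c = (\<Sum>x\<in>{(a, b). a + b = c}. if x = (0, c) then f c else 0)"
    unfolding umul_def uone_def by (rule sum.cong) (auto split: if_splits)
  then show "umul uone f c = f c" using finite_P[of c] by simp
qed

lemma umul_uone_right [simp]: "umul f uone = f"
proof (rule ext)
  fix c :: "nat \<Rightarrow>\<^sub>0 nat"
  have "umul f uone c = (\<Sum>x\<in>{(a, b). a + b = c}. if x = (c, 0) then f c else 0)"
    unfolding umul_def uone_def by (rule sum.cong) (auto split: if_splits)
  then show "umul f uone c = f c" using finite_P[of c] by simp
qed

lemma umul_uadd_left: "umul (uadd f g) h = uadd (umul f h) (umul g h)"
  unfolding umul_def uadd_def by (auto simp: algebra_simps sum.distrib case_prod_beta)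

lemma umul_uadd_right: "umul f (uadd g h) = uadd (umul f g) (umul f h)"
  unfolding umul_def uadd_def by (auto simp: algebra_simps sum.distrib case_prod_beta)

lemma umul_usmul_left: "umul (usmul z f) g = usmul z (umul f g)"
  unfolding umul_def usmul_def by (auto simp: algebra_simps sum_distrib_left case_prod_beta)

lemma umul_usmul_right: "umul f (usmul z g) = usmul z (umul f g)"
  unfolding umul_def usmul_def by (auto simp: algebra_simps sum_distrib_left case_prod_beta)

lemma umul_usum_left: "finite S \<Longrightarrow> umul (usum F S) g = usum (\<lambda>s. umul (F s) g) S"
  unfolding umul_def usum_def
  by (auto simp: sum_distrib_right sum_distrib_left case_prod_beta intro!: ext sum.swap)

lemma usmul_usmul [simp]: "usmul a (usmul b f) = usmul (a * b) f"
  by (simp add: usmul_def mult.assoc)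

lemma usmul_one [simp]: "usmul 1 f = f"
  by (simp add: usmul_def)


definition tau :: "uh \<Rightarrow> uh" where
  "tau f = (\<lambda>c. (-1) ^ mdeg c * f c)"

definition mon :: "(nat \<Rightarrow>\<^sub>0 nat) \<Rightarrow> uh" where
  "mon p = (\<lambda>c. if c = p then 1 else 0)"

definition fac :: "complex \<Rightarrow> nat \<Rightarrow> uh" where
  "fac s i = uadd (xx i) (usmul s (xi i))"

lemma mdeg_expand:
  assumes "finite K" "Poly_Mapping.keys a \<subseteq> K"
  shows "mdeg a = (\<Sum>i\<in>K. Poly_Mapping.lookup a i)"
  unfolding mdeg_def using assms by (intro sum.mono_neutral_left) (auto simp: in_keys_iff)

lemma mdeg_add: "mdeg (a + b) = mdeg a + mdeg b"
proof -
  let ?K = "Poly_Mapping.keys a \<union> Poly_Mapping.keys b"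
  have "mdeg (a + b) = (\<Sum>i\<in>?K. Poly_Mapping.lookup (a + b) i)"
    by (rule mdeg_expand) (auto simp: keys_add)
  also have "\<dots> = (\<Sum>i\<in>?K. Poly_Mapping.lookup a i) + (\<Sum>i\<in>?K. Poly_Mapping.lookup b i)"
    by (simp add: lookup_add sum.distrib)
  also have "\<dots> = mdeg a + mdeg b"
    by (subst (1 2) mdeg_expand[where K="?K"]) auto
  finally show ?thesis .
qed

lemma mdeg_zero [simp]: "mdeg 0 = 0"
  by (simp add: mdeg_def)

lemma mdeg_single [simp]: "mdeg (Poly_Mapping.single i k) = k"
  by (simp add: mdeg_def)

lemma tau_umul: "tau (umul f g) = umul (tau f) (tau g)"
  unfolding tau_def umul_def
  by (auto simp: sum_distrib_left case_prod_beta mdeg_add power_add algebra_simps intro!: ext sum.cong)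

lemma tau_uadd: "tau (uadd f g) = uadd (tau f) (tau g)"
  by (simp add: tau_def uadd_def algebra_simps)

lemma tau_usmul: "tau (usmul z f) = usmul z (tau f)"
  by (simp add: tau_def usmul_def algebra_simps)

lemma tau_tau [simp]: "tau (tau f) = f"
  by (simp add: tau_def power_mult_distrib[symmetric])

lemma tau_uone [simp]: "tau uone = uone"
  by (auto simp: tau_def uone_def)

lemma tau_usum: "tau (usum F S) = usum (\<lambda>s. tau (F s)) S"
  by (simp add: tau_def usum_def sum_distrib_left)

lemma msign_single: "msign (Poly_Mapping.single i m) (Poly_Mapping.single j k) = (if j < i then m * k else 0)"
  by (simp add: msign_def)

lemma umul_mon: "umul (mon p) (mon q) = usmul ((-1) ^ msign p q) (mon (p + q))"
proof (rule ext)
  fix c :: "nat \<Rightarrow>\<^sub>0 nat"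
  have "umul (mon p) (mon q) c = (\<Sum>x\<in>{(a, b). a + b = c}. if x = (p, q) then (-1) ^ msign p q else 0)"
    unfolding umul_def mon_def by (rule sum.cong) (auto split: if_splits)
  then show "umul (mon p) (mon q) c = usmul ((-1) ^ msign p q) (mon (p + q)) c"
    using finite_P[of c] by (auto simp: usmul_def mon_def)
qed

lemma xi_mon: "xi i = mon (Poly_Mapping.single i 1)"
  by (simp add: xi_def mon_def)

lemma xx_mon: "xx i = mon (Poly_Mapping.single i 2)"
proof -
  have "Poly_Mapping.single i (1::nat) + Poly_Mapping.single i 1 = Poly_Mapping.single i 2"
    by (simp only: single_add[symmetric] one_add_one)
  then show ?thesis by (simp add: xx_def xi_mon umul_mon msign_single del: One_nat_def)
qed

lemma tau_mon: "tau (mon p) = usmul ((-1) ^ mdeg p) (mon p)"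
  by (auto simp: tau_def mon_def usmul_def)

lemma tau_xi: "tau (xi i) = usmul (-1) (xi i)"
  by (simp add: xi_mon tau_mon)

lemma tau_xx: "tau (xx i) = xx i"
  by (simp add: xx_mon tau_mon)

lemma tau_fac: "tau (fac s i) = fac (- s) i"
  by (simp add: fac_def tau_uadd tau_usmul tau_xx tau_xi)

lemma add_eq_zero_pm: "(a::nat \<Rightarrow>\<^sub>0 nat) + b = 0 \<longleftrightarrow> a = 0 \<and> b = 0"
proof
  assume h: "a + b = 0"
  have "\<And>i. Poly_Mapping.lookup a i + Poly_Mapping.lookup b i = 0"
    using arg_cong[OF h, of "\<lambda>x. Poly_Mapping.lookup x i" for i] by (simp add: lookup_add)
  then show "a = 0 \<and> b = 0" by (auto intro!: poly_mapping_eqI)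
qed simp

lemma umul_at0: "umul f g 0 = f 0 * g 0"
proof -
  have "{(a, b). (a::nat \<Rightarrow>\<^sub>0 nat) + b = 0} = {(0, 0)}" by (auto simp: add_eq_zero_pm)
  then show ?thesis by (simp add: umul_def)
qed

lemma single_eq_0_iff [simp]: "(Poly_Mapping.single i (k::nat) = 0) = (k = 0)"
  by (metis lookup_single_eq lookup_zero single_zero)

lemma fac_at0: "fac s i 0 = 0"
  by (simp add: fac_def uadd_def usmul_def xx_mon xi_mon mon_def)


fun R :: "nat list \<Rightarrow> uh" where
  "R [] = uone"
| "R (x # xs) = umul (fac ((-1) ^ length xs) x) (R xs)"

lemma prod_enum:
  "n + length xs = Suc k \<Longrightarrow>
   uprodl (map (\<lambda>(j, i). uadd (xx i) (usmul ((-1) ^ (k - j)) (xi i))) (enumerate n xs)) = R xs"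
proof (induction xs arbitrary: n)
  case Nil then show ?case by (simp add: uprodl_def)
next
  case (Cons x xs)
  have "k - n = length xs" using Cons.prems by simp
  moreover have "uprodl (map (\<lambda>(j, i). uadd (xx i) (usmul ((-1) ^ (k - j)) (xi i))) (enumerate (Suc n) xs)) = R xs"
    using Cons by simp
  ultimately show ?case by (simp add: uprodl_def fac_def)
qed

lemma R_snoc: "R (xs @ [y]) = umul (tau (R xs)) (fac 1 y)"
proof (induction xs)
  case Nil then show ?case by simp
next
  case (Cons x xs)
  then show ?case by (simp add: umul_assoc tau_umul tau_fac)
qed

definition Sset :: "nat \<Rightarrow> nat \<Rightarrow> nat set set" where
  "Sset m k = {I. I \<subseteq> {1..m} \<and> card I = k}"

lemma finite_Sset [simp]: "finite (Sset m k)"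
  unfolding Sset_def by (rule finite_subset[of _ "Pow {1..m}"]) auto

lemma usum_cong: "(\<And>s. s \<in> S \<Longrightarrow> F s = G s) \<Longrightarrow> usum F S = usum G S"
  unfolding usum_def by (auto intro!: ext sum.cong)

lemma usum_union: "finite A \<Longrightarrow> finite B \<Longrightarrow> A \<inter> B = {} \<Longrightarrow> usum F (A \<union> B) = uadd (usum F A) (usum F B)"
  unfolding usum_def uadd_def by (auto intro!: ext sum.union_disjoint)

lemma usum_reindex: "inj_on g A \<Longrightarrow> usum F (g ` A) = usum (F \<circ> g) A"
  unfolding usum_def by (auto intro!: ext simp: sum.reindex)

lemma ugen_R: "ugen m k = usum (\<lambda>I. R (sorted_list_of_set I)) (Sset m k)"
  unfolding ugen_def Sset_def
proof (rule usum_cong)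
  fix I assume "I \<in> {I. I \<subseteq> {1..m} \<and> card I = k}"
  then have "finite I" "card I = k" by (auto intro: finite_subset)
  then show "uprodl (map (\<lambda>(j, i). uadd (xx i) (usmul ((-1) ^ (k - j)) (xi i))) (enumerate 1 (sorted_list_of_set I))) =
        R (sorted_list_of_set I)"
    by (intro prod_enum) simp
qed

lemma Sset_Suc:
  assumes "k \<ge> 1"
  shows "Sset (Suc m) k = Sset m k \<union> insert (Suc m) ` Sset m (k - 1)"
proof
  show "Sset (Suc m) k \<subseteq> Sset m k \<union> insert (Suc m) ` Sset m (k - 1)"
  proof
    fix I assume I: "I \<in> Sset (Suc m) k"
    then have sub: "I \<subseteq> {1..Suc m}" and c: "card I = k" by (auto simp: Sset_def)
    have fin: "finite I" using sub by (auto intro: finite_subset)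
    show "I \<in> Sset m k \<union> insert (Suc m) ` Sset m (k - 1)"
    proof (cases "Suc m \<in> I")
      case True
      have "I - {Suc m} \<in> Sset m (k - 1)"
        using sub c fin True by (auto simp: Sset_def card_Diff_singleton)
      moreover have "I = insert (Suc m) (I - {Suc m})" using True by auto
      ultimately show ?thesis by blast
    next
      case False
      then have "I \<subseteq> {1..m}" using sub by (auto simp: le_Suc_eq)
      then show ?thesis using c by (auto simp: Sset_def)
    qed
  qed
next
  show "Sset m k \<union> insert (Suc m) ` Sset m (k - 1) \<subseteq> Sset (Suc m) k"
  proof
    fix I assume "I \<in> Sset m k \<union> insert (Suc m) ` Sset m (k - 1)"
    then show "I \<in> Sset (Suc m) k"
    proof
      assume "I \<in> Sset m k" then show ?thesis by (auto simp: Sset_def)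
    next
      assume "I \<in> insert (Suc m) ` Sset m (k - 1)"
      then obtain J where J: "J \<subseteq> {1..m}" "card J = k - 1" "I = insert (Suc m) J"
        by (auto simp: Sset_def)
      have "finite J" using J(1) by (auto intro: finite_subset)
      moreover have "Suc m \<notin> J" using J(1) by auto
      ultimately have "card I = k" using J assms by simp
      then show ?thesis using J by (auto simp: Sset_def)
    qed
  qed
qed

lemma Sset_disj: "Sset m k \<inter> insert (Suc m) ` Sset m j = {}"
  by (auto simp: Sset_def)

lemma Sset_inj: "inj_on (insert (Suc m)) (Sset m j)"
proof (rule inj_onI)
  fix A B assume h: "A \<in> Sset m j" "B \<in> Sset m j" and eq: "insert (Suc m) A = insert (Suc m) B"
  have "Suc m \<notin> A" "Suc m \<notin> B" using h by (auto simp: Sset_def)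
  then show "A = B" using eq by (metis Diff_insert_absorb)
qed

lemma sorted_insert_max:
  assumes "finite A" "\<forall>a\<in>A. a < (x::nat)"
  shows "sorted_list_of_set (insert x A) = sorted_list_of_set A @ [x]"
proof -
  have "x \<notin> A" using assms by auto
  then have "sorted_list_of_set (insert x A) = insort x (sorted_list_of_set A)"
    using assms by simp
  also have "\<dots> = sorted_list_of_set A @ [x]"
    using assms by (intro sorted_insort_is_snoc) auto
  finally show ?thesis .
qed

lemma ugen_Suc:
  assumes "k \<ge> 1"
  shows "ugen (Suc m) k = uadd (ugen m k) (umul (tau (ugen m (k - 1))) (fac 1 (Suc m)))"
proof -
  let ?G = "\<lambda>I. R (sorted_list_of_set I)"
  have "ugen (Suc m) k = uadd (usum ?G (Sset m k)) (usum ?G (insert (Suc m) ` Sset m (k - 1)))"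
    unfolding ugen_R Sset_Suc[OF assms] by (rule usum_union) (auto simp: Sset_disj)
  also have "usum ?G (insert (Suc m) ` Sset m (k - 1)) = usum (?G \<circ> insert (Suc m)) (Sset m (k - 1))"
    by (rule usum_reindex[OF Sset_inj])
  also have "\<dots> = usum (\<lambda>I. umul (tau (?G I)) (fac 1 (Suc m))) (Sset m (k - 1))"
  proof (rule usum_cong)
    fix I assume "I \<in> Sset m (k - 1)"
    then have "finite I" "\<forall>a\<in>I. a < Suc m" by (auto simp: Sset_def intro: finite_subset)
    then have "sorted_list_of_set (insert (Suc m) I) = sorted_list_of_set I @ [Suc m]"
      by (rule sorted_insert_max)
    then show "(?G \<circ> insert (Suc m)) I = umul (tau (?G I)) (fac 1 (Suc m))"
      by (simp add: R_snoc)
  qed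
  also have "\<dots> = umul (tau (ugen m (k - 1))) (fac 1 (Suc m))"
    by (simp add: ugen_R umul_usum_left tau_usum)
  finally show ?thesis by (simp add: ugen_R)
qed

lemma Sset_0: "Sset m 0 = {{}}"
proof -
  have "x = {}" if "x \<subseteq> {1..m}" "card x = 0" for x
    using that finite_subset[of x "{1..m}"] by auto
  then show "Sset m 0 = {{}}" by (auto simp: Sset_def)
qed

lemma Sset_big: "k > m \<Longrightarrow> Sset m k = {}"
proof -
  assume km: "k > m"
  have le_m: "card I \<le> m" if "I \<subseteq> {1..m}" for I
    using card_mono[OF finite_atLeastAtMost that] by simp
  show "Sset m k = {}" using km le_m by (auto simp: Sset_def) (metis One_nat_def not_le)
qed

lemma ugen_0: "ugen m 0 = uone"
  by (simp add: ugen_R usum_def Sset_0)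

lemma ugen_big: "k > m \<Longrightarrow> ugen m k = (\<lambda>_. 0)"
  by (simp add: ugen_R usum_def Sset_big)

lemma R_at0: "xs \<noteq> [] \<Longrightarrow> R xs 0 = 0"
  by (cases xs) (auto simp: umul_at0 fac_at0)

lemma ugen_at0: "k \<ge> 1 \<Longrightarrow> ugen m k 0 = 0"
proof -
  assume k: "k \<ge> 1"
  have "\<And>I. I \<in> Sset m k \<Longrightarrow> R (sorted_list_of_set I) 0 = 0"
  proof -
    fix I assume "I \<in> Sset m k"
    then have "finite I" "card I = k" by (auto simp: Sset_def intro: finite_subset)
    then have "sorted_list_of_set I \<noteq> []" using k by auto
    then show "R (sorted_list_of_set I) 0 = 0" by (rule R_at0)
  qed
  then show ?thesis by (simp add: ugen_R usum_def)
qed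


lemma esym_Sset: "esym a q t = (\<Sum>S\<in>Sset q a. \<Prod>i\<in>S. t i)"
  by (simp add: esym_def Sset_def)

lemma esym_0 [simp]: "esym 0 q t = 1"
  by (simp add: esym_Sset Sset_0)

lemma esym_big: "a > q \<Longrightarrow> esym a q t = 0"
  by (simp add: esym_Sset Sset_big)

lemma esym_Suc: "esym (Suc j) (Suc q) t = esym (Suc j) q t + t (Suc q) * esym j q t"
proof -
  have "esym (Suc j) (Suc q) t = (\<Sum>S\<in>Sset q (Suc j). \<Prod>i\<in>S. t i) + (\<Sum>S\<in>insert (Suc q) ` Sset q j. \<Prod>i\<in>S. t i)"
    unfolding esym_Sset using Sset_Suc[of "Suc j" q]
    by (simp add: sum.union_disjoint Sset_disj)
  also have "(\<Sum>S\<in>insert (Suc q) ` Sset q j. \<Prod>i\<in>S. t i) = (\<Sum>S\<in>Sset q j. \<Prod>i\<in>insert (Suc q) S. t i)"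
    by (simp add: sum.reindex[OF Sset_inj])
  also have "\<dots> = (\<Sum>S\<in>Sset q j. t (Suc q) * (\<Prod>i\<in>S. t i))"
  proof (rule sum.cong)
    fix S assume "S \<in> Sset q j"
    then have "finite S" "Suc q \<notin> S" by (auto simp: Sset_def intro: finite_subset)
    then show "(\<Prod>i\<in>insert (Suc q) S. t i) = t (Suc q) * (\<Prod>i\<in>S. t i)" by simp
  qed simp
  finally show ?thesis by (simp add: esym_Sset sum_distrib_left)
qed

definition Ef :: "(nat \<Rightarrow> complex) \<Rightarrow> nat \<Rightarrow> nat \<Rightarrow> complex" where
  "Ef t q k = (if even k then esym (k div 2) q t else 0)"

lemma Ef_0 [simp]: "Ef t q 0 = 1" by (simp add: Ef_def)
lemma Ef_1 [simp]: "Ef t q 1 = 0" by (simp add: Ef_def)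
lemma Ef_1' [simp]: "Ef t q (Suc 0) = 0" by (simp add: Ef_def)
lemma Ef_base: "k \<ge> 1 \<Longrightarrow> Ef t 0 k = 0"
  by (auto simp: Ef_def intro!: esym_big)

lemma Ef_Suc: "k \<ge> 2 \<Longrightarrow> Ef t (Suc q) k = Ef t q k + Ef t q (k - 2) * t (Suc q)"
proof -
  assume k: "k \<ge> 2"
  show ?thesis
  proof (cases "even k")
    case True
    then obtain j where j: "k = 2 * Suc j" using k by (metis evenE Suc_pred' not_numeral_le_zero nat_0_less_mult_iff mult_0_right zero_less_iff_neq_zero)
    then have "k - 2 = 2 * j" by simp
    then show ?thesis using j by (simp add: Ef_def esym_Suc)
  next
    case False
    then have "odd (k - 2)" using k by auto
    then show ?thesis using False by (simp add: Ef_def)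
  qed
qed

lemma blk_sum:
  "uadd (fac 1 (blk_a r i)) (fac 1 (blk_b r i)) = uadd (z0 r i) (phi0 r i)"
  by (simp add: fac_def z0_def phi0_def uadd_def usmul_def fun_eq_iff)

lemma blk_prod:
  assumes "i \<ge> 1"
  shows "umul (fac (-1) (blk_a r i)) (fac 1 (blk_b r i)) = uadd (z1' r i) (usmul (-1) (phi1 r i))"
proof -
  have lt: "blk_a r i < blk_b r i" using assms by (simp add: blk_a_def blk_b_def)
  show ?thesis
    using lt
    by (simp add: fac_def z1'_def phi1_def xx_mon xi_mon umul_uadd_left umul_uadd_right
        umul_usmul_left umul_usmul_right umul_mon msign_single)
       (auto simp: uadd_def usmul_def mon_def fun_eq_iff add.commute)
qed


lemma tau_z0: "tau (z0 r i) = z0 r i"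
  by (simp add: z0_def tau_uadd tau_xx)

lemma tau_phi0: "tau (phi0 r i) = usmul (-1) (phi0 r i)"
  unfolding phi0_def tau_uadd tau_xi by (simp add: uadd_def usmul_def fun_eq_iff algebra_simps)

lemma tau_z1': "tau (z1' r i) = z1' r i"
  by (simp add: z1'_def tau_uadd tau_xx tau_xi tau_umul tau_usmul umul_usmul_left umul_usmul_right)

lemma tau_phi1: "tau (phi1 r i) = usmul (-1) (phi1 r i)"
  unfolding phi1_def tau_uadd tau_xx tau_xi tau_umul tau_usmul umul_usmul_left umul_usmul_right
  by (simp add: uadd_def usmul_def fun_eq_iff algebra_simps)

lemma subalg_mono: "G \<subseteq> H \<Longrightarrow> x \<in> subalg G \<Longrightarrow> x \<in> subalg H"
proof -
  assume GH: "G \<subseteq> H"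
  assume "x \<in> subalg G"
  then show "x \<in> subalg H"
    by (induction rule: subalg.induct) (use GH in \<open>auto intro: subalg.intros\<close>)
qed

lemma upart_split: "f = uadd (upart 0 f) (upart 1 f)"
  by (auto simp: uadd_def upart_def fun_eq_iff)

lemma tau_upart: "tau f = uadd (upart 0 f) (usmul (-1) (upart 1 f))"
  by (auto simp: tau_def uadd_def usmul_def upart_def fun_eq_iff elim!: oddE evenE simp: mod2_eq_if)

lemma upart0_eq: "upart 0 f = usmul (1/2) (uadd f (tau f))"
  by (auto simp: tau_def uadd_def usmul_def upart_def fun_eq_iff mod2_eq_if)

lemma upart1_eq: "upart 1 f = usmul (1/2) (uadd f (usmul (-1) (tau f)))"
  by (auto simp: tau_def uadd_def usmul_def upart_def fun_eq_iff mod2_eq_if)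


lemma ugen_step1:
  "ugen (Suc (Suc m)) 1 = uadd (ugen m 1) (uadd (fac 1 (Suc m)) (fac 1 (Suc (Suc m))))"
proof -
  have "ugen (Suc (Suc m)) 1 = uadd (uadd (ugen m 1) (fac 1 (Suc m))) (fac 1 (Suc (Suc m)))"
    by (simp add: ugen_Suc ugen_0)
  also have "\<dots> = uadd (ugen m 1) (uadd (fac 1 (Suc m)) (fac 1 (Suc (Suc m))))"
    by (simp add: uadd_def add.assoc)
  finally show ?thesis .
qed

lemma ugen_step2:
  assumes "k \<ge> 2"
  shows "ugen (Suc (Suc m)) k = uadd (ugen m k)
     (uadd (umul (tau (ugen m (k - 1))) (uadd (fac 1 (Suc m)) (fac 1 (Suc (Suc m)))))
           (umul (ugen m (k - 2)) (umul (fac (-1) (Suc m)) (fac 1 (Suc (Suc m))))))"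
proof -
  have k1: "k \<ge> 1" "k - 1 \<ge> 1" and k2: "k - 1 - 1 = k - 2" using assms by auto
  have "ugen (Suc (Suc m)) k = uadd (uadd (ugen m k) (umul (tau (ugen m (k - 1))) (fac 1 (Suc m))))
      (umul (uadd (tau (ugen m (k - 1))) (umul (ugen m (k - 2)) (fac (-1) (Suc m)))) (fac 1 (Suc (Suc m))))"
    using k1 k2 by (simp add: ugen_Suc tau_uadd tau_umul tau_fac)
  also have "\<dots> = uadd (ugen m k)
     (uadd (umul (tau (ugen m (k - 1))) (uadd (fac 1 (Suc m)) (fac 1 (Suc (Suc m)))))
           (umul (ugen m (k - 2)) (umul (fac (-1) (Suc m)) (fac 1 (Suc (Suc m))))))"
    by (simp add: umul_uadd_left umul_uadd_right umul_assoc) (simp add: uadd_def fun_eq_iff add.assoc)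
  finally show ?thesis .
qed

lemma main_ind:
  assumes chi: "is_S_char r p t \<chi>"
  shows "q \<le> p \<Longrightarrow> \<forall>k. ugen (r + 2 * q) k \<in> Wtens r p \<and> \<chi> (ugen (r + 2 * q) k) = Ef t q k \<and>
            tau (ugen (r + 2 * q) k) \<in> Wtens r p \<and> \<chi> (tau (ugen (r + 2 * q) k)) = Ef t q k"
proof -
  let ?WT = "Wtens r p"
  have one: "uone \<in> ?WT" by (simp add: Wtens_def subalg.one)
  have add: "\<And>a b. a \<in> ?WT \<Longrightarrow> b \<in> ?WT \<Longrightarrow> uadd a b \<in> ?WT" by (simp add: Wtens_def subalg.add)
  have mul: "\<And>a b. a \<in> ?WT \<Longrightarrow> b \<in> ?WT \<Longrightarrow> umul a b \<in> ?WT" by (simp add: Wtens_def subalg.mul)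
  have smul: "\<And>a z. a \<in> ?WT \<Longrightarrow> usmul z a \<in> ?WT" by (simp add: Wtens_def subalg.smul)
  have cone: "\<chi> uone = 1" using chi by (simp add: is_S_char_def)
  have cadd: "\<And>a b. a \<in> ?WT \<Longrightarrow> b \<in> ?WT \<Longrightarrow> \<chi> (uadd a b) = \<chi> a + \<chi> b"
    using chi by (simp add: is_S_char_def)
  have cmul: "\<And>a b. a \<in> ?WT \<Longrightarrow> b \<in> ?WT \<Longrightarrow> \<chi> (umul a b) = \<chi> a * \<chi> b"
    using chi by (simp add: is_S_char_def)
  have csmul: "\<And>a z. a \<in> ?WT \<Longrightarrow> \<chi> (usmul z a) = z * \<chi> a"
    using chi by (simp add: is_S_char_def)
  have cW: "\<And>a. a \<in> W r \<Longrightarrow> \<chi> a = counit a"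
    using chi by (simp add: is_S_char_def)
  have WrT: "\<And>a. a \<in> W r \<Longrightarrow> a \<in> ?WT"
    unfolding Wtens_def by (erule subalg_mono[rotated]) auto
  have gens: "\<And>i. i \<in> {1..p} \<Longrightarrow> phi0 r i \<in> ?WT \<and> phi1 r i \<in> ?WT \<and> z0 r i \<in> ?WT \<and> z1' r i \<in> ?WT"
    unfolding Wtens_def by (auto intro!: subalg.gen)
  have cgens: "\<And>i. i \<in> {1..p} \<Longrightarrow> \<chi> (phi0 r i) = 0 \<and> \<chi> (phi1 r i) = 0 \<and> \<chi> (z0 r i) = 0 \<and> \<chi> (z1' r i) = t i"
    using chi by (simp add: is_S_char_def)
  have zero: "(\<lambda>_. 0) = usmul 0 uone" by (simp add: usmul_def)
  have tzero: "tau (\<lambda>_. 0) = (\<lambda>_. 0)" by (simp add: tau_def)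
  show "q \<le> p \<Longrightarrow> ?thesis"
  proof (induction q)
    case 0
    show ?case
    proof
      fix k
      consider "k = 0" | "1 \<le> k \<and> k \<le> r" | "k > r" by linarith
      then show "ugen (r + 2 * 0) k \<in> ?WT \<and> \<chi> (ugen (r + 2 * 0) k) = Ef t 0 k \<and>
            tau (ugen (r + 2 * 0) k) \<in> ?WT \<and> \<chi> (tau (ugen (r + 2 * 0) k)) = Ef t 0 k"
      proof cases
        case 1 then show ?thesis using one cone by (simp add: ugen_0)
      next
        case 2
        have in0: "u r k 0 \<in> W r" "u r k 1 \<in> W r"
          using 2 by (auto intro!: subalg.gen simp: Wgens_def)
        have c0: "counit (u r k 0) = 0" "counit (u r k 1) = 0"
          using 2 by (simp_all add: counit_def u_def upart_def ugen_at0)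
        have e1: "ugen r k = uadd (u r k 0) (u r k 1)"
          unfolding u_def by (rule upart_split)
        have e2: "tau (ugen r k) = uadd (u r k 0) (usmul (-1) (u r k 1))"
          unfolding u_def by (rule tau_upart)
        have f1: "ugen r k \<in> ?WT" "\<chi> (ugen r k) = 0"
          unfolding e1 using in0 c0 WrT cW by (simp_all add: add cadd)
        have f2: "tau (ugen r k) \<in> ?WT" "\<chi> (tau (ugen r k)) = 0"
          unfolding e2 using in0 c0 WrT cW by (simp_all add: add smul cadd csmul)
        show ?thesis using 2 f1 f2 by (simp add: Ef_base)
      next
        case 3
        then show ?thesis using one cone zero tzero smul csmul
          by (simp add: ugen_big Ef_base)
      qed
    qed
  next
    case (Suc q)
    then have IH: "\<forall>k. ugen (r + 2 * q) k \<in> ?WT \<and> \<chi> (ugen (r + 2 * q) k) = Ef t q k \<and>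
            tau (ugen (r + 2 * q) k) \<in> ?WT \<and> \<chi> (tau (ugen (r + 2 * q) k)) = Ef t q k" by simp
    define m where "m = r + 2 * q"
    have i: "Suc q \<in> {1..p}" using Suc.prems by simp
    have mm: "r + 2 * Suc q = Suc (Suc m)" by (simp add: m_def)
    have ba: "blk_a r (Suc q) = Suc m" and bb: "blk_b r (Suc q) = Suc (Suc m)"
      by (simp_all add: blk_a_def blk_b_def m_def)
    have B1: "uadd (fac 1 (Suc m)) (fac 1 (Suc (Suc m))) = uadd (z0 r (Suc q)) (phi0 r (Suc q))"
      using blk_sum[of r "Suc q"] by (simp add: ba bb)
    have B2: "umul (fac (-1) (Suc m)) (fac 1 (Suc (Suc m))) = uadd (z1' r (Suc q)) (usmul (-1) (phi1 r (Suc q)))"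
      using blk_prod[of "Suc q" r] by (simp add: ba bb)
    define H1 where "H1 = uadd (z0 r (Suc q)) (phi0 r (Suc q))"
    define H2 where "H2 = uadd (z1' r (Suc q)) (usmul (-1) (phi1 r (Suc q)))"
    have h1: "H1 \<in> ?WT" "\<chi> H1 = 0" "tau H1 \<in> ?WT" "\<chi> (tau H1) = 0"
      using gens[OF i] cgens[OF i] unfolding H1_def
      by (simp_all add: add smul cadd csmul tau_uadd tau_z0 tau_phi0)
    have h2: "H2 \<in> ?WT" "\<chi> H2 = t (Suc q)" "tau H2 \<in> ?WT" "\<chi> (tau H2) = t (Suc q)"
      using gens[OF i] cgens[OF i] unfolding H2_def
      by (simp_all add: add smul cadd csmul tau_uadd tau_usmul tau_z1' tau_phi1)
    note B1 = B1[folded H1_def] and B2 = B2[folded H2_def]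
    show ?case
    proof
      fix k
      consider "k = 0" | "k = 1" | "k \<ge> (2::nat)" by linarith
      then show "ugen (r + 2 * Suc q) k \<in> ?WT \<and> \<chi> (ugen (r + 2 * Suc q) k) = Ef t (Suc q) k \<and>
            tau (ugen (r + 2 * Suc q) k) \<in> ?WT \<and> \<chi> (tau (ugen (r + 2 * Suc q) k)) = Ef t (Suc q) k"
      proof cases
        case 1 then show ?thesis using one cone by (simp add: ugen_0)
      next
        case 2
        have U: "ugen m 1 \<in> ?WT" "\<chi> (ugen m 1) = 0" "tau (ugen m 1) \<in> ?WT" "\<chi> (tau (ugen m 1)) = 0"
          using IH[rule_format, of 1] by (simp_all add: m_def)
        show ?thesis unfolding mm 2 ugen_step1 B1 tau_uadd
          using U h1 by (simp add: add cadd)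
      next
        case 3
        have U0: "ugen m k \<in> ?WT" "\<chi> (ugen m k) = Ef t q k" "tau (ugen m k) \<in> ?WT" "\<chi> (tau (ugen m k)) = Ef t q k"
          using IH[rule_format, of k] by (simp_all add: m_def)
        have U1: "ugen m (k-1) \<in> ?WT" "\<chi> (ugen m (k-1)) = Ef t q (k-1)" "tau (ugen m (k-1)) \<in> ?WT" "\<chi> (tau (ugen m (k-1))) = Ef t q (k-1)"
          using IH[rule_format, of "k-1"] by (simp_all add: m_def)
        have U2: "ugen m (k-2) \<in> ?WT" "\<chi> (ugen m (k-2)) = Ef t q (k-2)" "tau (ugen m (k-2)) \<in> ?WT" "\<chi> (tau (ugen m (k-2))) = Ef t q (k-2)"
          using IH[rule_format, of "k-2"] by (simp_all add: m_def)
        have E: "Ef t (Suc q) k = Ef t q k + Ef t q (k - 2) * t (Suc q)" using 3 by (rule Ef_Suc)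
        show ?thesis unfolding mm ugen_step2[OF 3] B1 B2 tau_uadd tau_umul tau_tau
          using U0 U1 U2 h1 h2 E by (simp add: add mul cadd cmul mult.commute)
      qed
    qed
  qed
qed


theorem lemma4p6:
  fixes r p n :: nat and t :: "nat \<Rightarrow> complex" and \<chi> :: "uh \<Rightarrow> complex"
  assumes "r + 2 * p = n"
    and "\<forall>i\<in>{1..p}. t i \<noteq> 0"
    and "is_S_char r p t \<chi>"
  shows "\<forall>k\<in>{1..n}. \<chi> (u n k 1) = 0 \<and>
           \<chi> (u n k 0) = (if odd k \<or> k > 2 * p then 0 else esym (k div 2) p t)"
proof
  fix k assume k: "k \<in> {1..n}"
  have M: "ugen n k \<in> Wtens r p \<and> \<chi> (ugen n k) = Ef t p k \<and>
            tau (ugen n k) \<in> Wtens r p \<and> \<chi> (tau (ugen n k)) = Ef t p k"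
    using main_ind[OF assms(3), of p] assms(1) by simp
  have add: "\<And>a b. a \<in> Wtens r p \<Longrightarrow> b \<in> Wtens r p \<Longrightarrow> uadd a b \<in> Wtens r p"
    by (simp add: Wtens_def subalg.add)
  have smul: "\<And>a z. a \<in> Wtens r p \<Longrightarrow> usmul z a \<in> Wtens r p"
    by (simp add: Wtens_def subalg.smul)
  have cadd: "\<And>a b. a \<in> Wtens r p \<Longrightarrow> b \<in> Wtens r p \<Longrightarrow> \<chi> (uadd a b) = \<chi> a + \<chi> b"
    using assms(3) by (simp add: is_S_char_def)
  have csmul: "\<And>a z. a \<in> Wtens r p \<Longrightarrow> \<chi> (usmul z a) = z * \<chi> a"
    using assms(3) by (simp add: is_S_char_def)
  have c1: "\<chi> (u n k 1) = 0"
    unfolding u_def upart1_eq using M by (simp add: add smul cadd csmul)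
  have c0: "\<chi> (u n k 0) = Ef t p k"
    unfolding u_def upart0_eq using M by (simp add: add smul cadd csmul)
  have "Ef t p k = (if odd k \<or> k > 2 * p then 0 else esym (k div 2) p t)"
    by (auto simp: Ef_def intro!: esym_big)
  then show "\<chi> (u n k 1) = 0 \<and>
           \<chi> (u n k 0) = (if odd k \<or> k > 2 * p then 0 else esym (k div 2) p t)"
    using c0 c1 by simp
qed

end
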